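(* Let $D\ge2$, let $\eta_{\mu\nu}$ be a nondegenerate symmetric bilinear form on $\mathbb{R}^D$ with inverse $\eta^{\mu\nu}$, and let $a_{\mu\nu\rho\lambda}$ be a real tensor on $\mathbb{R}^D$ satisfying $$a_{\mu\nu\rho\lambda}=-a_{\nu\mu\rho\lambda}=-a_{\mu\nu\lambda\rho}=a_{\rho\lambda\mu\nu},\qquad a_{\mu\nu\rho\lambda}+a_{\mu\rho\lambda\nu}+a_{\mu\lambda\nu\rho}=0.$$ Suppose that for all $u,v\in\mathbb{R}^D$, $$a_{\mu\rho\nu\lambda}\,\eta^{\mu\nu}v^\rho v^\lambda\,(u\cdot v)^2+a_{\mu\rho\nu\lambda}\,u^\mu u^\nu v^\rho v^\lambda\,(v\cdot v)=0,$$ where $u\cdot v=\eta_{\alpha\beta}u^\alpha v^\beta$. Then $a_{\mu\nu\rho\lambda}=0$.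
   Context: This polynomial identity is the condition (in the variables $u^\mu=\partial_zX^\mu$, $v^\mu=\partial_{\bar z}X^\mu$) for the operator $:\!\big(a_{\mu\nu\rho\lambda}\partial_zX^\mu\partial_{\bar z}X^\nu\partial_zX^\rho\partial_{\bar z}X^\lambda\big)/\big(\eta_{\alpha\beta}\partial_zX^\alpha\partial_{\bar z}X^\beta\big)\!:$ in the free boson theory with target metric $\eta$ to be a conformal primary, i.e. the condition $\eta^{\mu\nu}\partial^2F/\partial u^\mu\partial u^\nu=0$ for $F(u,v)=a_{\mu\rho\nu\lambda}u^\mu u^\nu v^\rho v^\lambda/(u\cdot v)$. The symmetry conditions on $a$ are those of an areal metric (perturbation) with the cyclicity condition. *)

theory Defs
  imports "HOL-Analysis.Analysis"
begin

definition eta_dot :: "real^'n^'n \<Rightarrow> real^'n \<Rightarrow> real^'n \<Rightarrow> real" where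
  "eta_dot eta u v = (\<Sum>\<alpha>\<in>UNIV. \<Sum>\<beta>\<in>UNIV. eta $ \<alpha> $ \<beta> * u $ \<alpha> * v $ \<beta>)"

end

theory Submission
  imports Defs
begin

definition a4 :: "('n::finite \<Rightarrow> 'n \<Rightarrow> 'n \<Rightarrow> 'n \<Rightarrow> real) \<Rightarrow> real^'n \<Rightarrow> real^'n \<Rightarrow> real^'n \<Rightarrow> real^'n \<Rightarrow> real" where
 "a4 a x y z w = (\<Sum>m\<in>UNIV. \<Sum>r\<in>UNIV. \<Sum>n\<in>UNIV. \<Sum>l\<in>UNIV. a m r n l * x$m * y$r * z$n * w$l)"

lemma a4_pair: assumes "\<And>m n r l. a m n r l = a r l m n"
  shows "a4 a x y z w = a4 a z w x y"
proof -
  have "a4 a x y z w = (\<Sum>m\<in>UNIV. \<Sum>n\<in>UNIV. \<Sum>r\<in>UNIV. \<Sum>l\<in>UNIV. a m r n l * x$m * y$r * z$n * w$l)"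
    unfolding a4_def by (rule sum.cong[OF refl], rule sum.swap)
  also have "\<dots> = (\<Sum>n\<in>UNIV. \<Sum>m\<in>UNIV. \<Sum>r\<in>UNIV. \<Sum>l\<in>UNIV. a m r n l * x$m * y$r * z$n * w$l)"
    by (rule sum.swap)
  also have "\<dots> = (\<Sum>n\<in>UNIV. \<Sum>m\<in>UNIV. \<Sum>l\<in>UNIV. \<Sum>r\<in>UNIV. a m r n l * x$m * y$r * z$n * w$l)"
    by (rule sum.cong[OF refl], rule sum.cong[OF refl], rule sum.swap)
  also have "\<dots> = (\<Sum>n\<in>UNIV. \<Sum>l\<in>UNIV. \<Sum>m\<in>UNIV. \<Sum>r\<in>UNIV. a m r n l * x$m * y$r * z$n * w$l)"
    by (rule sum.cong[OF refl], rule sum.swap)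
  also have "\<dots> = a4 a z w x y" unfolding a4_def
    by (intro sum.cong refl) (simp add: assms[of _ _ _ ] mult.commute mult.left_commute)
  finally show ?thesis .
qed

lemma a4_add1: "a4 a (x + x') y z w = a4 a x y z w + a4 a x' y z w"
  unfolding a4_def by (simp add: sum.distrib[symmetric] algebra_simps)
lemma a4_add2: "a4 a x (y+y') z w = a4 a x y z w + a4 a x y' z w"
  unfolding a4_def by (simp add: sum.distrib[symmetric] algebra_simps)
lemma a4_add3: "a4 a x y (z+z') w = a4 a x y z w + a4 a x y z' w"
  unfolding a4_def by (simp add: sum.distrib[symmetric] algebra_simps)
lemma a4_add4: "a4 a x y z (w+w') = a4 a x y z w + a4 a x y z w'"
  unfolding a4_def by (simp add: sum.distrib[symmetric] algebra_simps)

lemma eta_add1: "eta_dot eta (x+x') y = eta_dot eta x y + eta_dot eta x' y"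
  unfolding eta_dot_def by (simp add: sum.distrib[symmetric] algebra_simps)
lemma eta_add2: "eta_dot eta x (y+y') = eta_dot eta x y + eta_dot eta x y'"
  unfolding eta_dot_def by (simp add: sum.distrib[symmetric] algebra_simps)
lemma eta_scale1: "eta_dot eta (c *\<^sub>R x) y = c * eta_dot eta x y"
  unfolding eta_dot_def by (simp add: sum_distrib_left algebra_simps)
lemma eta_scale2: "eta_dot eta x (c *\<^sub>R y) = c * eta_dot eta x y"
  unfolding eta_dot_def by (simp add: sum_distrib_left algebra_simps)
lemma eta_sym: assumes "transpose eta = eta" shows "eta_dot eta x y = eta_dot eta y x"
proof -
  have e: "eta $ i $ j = eta $ j $ i" for i j
    using arg_cong[OF assms, of "\<lambda>M. M $ i $ j"] by (simp add: transpose_def)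
  show ?thesis unfolding eta_dot_def
    by (subst sum.swap) (intro sum.cong refl, simp add: e[of _ ] mult.commute mult.left_commute)
qed

lemma a4_cont: "continuous_on UNIV (\<lambda>t::real. a4 a u (v + t *\<^sub>R w) u (v + t *\<^sub>R w))"
  unfolding a4_def by (intro continuous_intros)

lemma ax: "axis i (1::real) $ k = (if k = i then 1 else 0)" by (simp add: axis_def)
lemma a4_axis: "a4 a (axis i 1) (axis j 1) (axis k 1) (axis l 1) = a i j k l"
  unfolding a4_def ax by (simp add: if_distrib[where f="\<lambda>x. x * _"] if_distrib[where f="\<lambda>x. _ * x"] cong: if_cong)
lemma eta_dot_axis: "eta_dot eta (axis i 1) (axis j 1) = eta $ i $ j"
  unfolding eta_dot_def ax by (simp add: if_distrib[where f="\<lambda>x. x * _"] if_distrib[where f="\<lambda>x. _ * x"] cong: if_cong)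
lemma a4_anti: assumes "\<And>m n r l. a m n r l = - a n m r l"
  shows "a4 a x y z w = - a4 a y x z w"
proof -
  have "a4 a x y z w = (\<Sum>r\<in>UNIV. \<Sum>m\<in>UNIV. \<Sum>n\<in>UNIV. \<Sum>l\<in>UNIV. a m r n l * x$m * y$r * z$n * w$l)"
    unfolding a4_def by (rule sum.swap)
  also have "\<dots> = (\<Sum>r\<in>UNIV. \<Sum>m\<in>UNIV. \<Sum>n\<in>UNIV. \<Sum>l\<in>UNIV. - (a r m n l * y$r * x$m * z$n * w$l))"
    by (intro sum.cong refl) (subst assms, simp)
  also have "\<dots> = - a4 a y x z w" unfolding a4_def by (simp add: sum_negf)
  finally show ?thesis .
qed

lemma Q_expand: assumes "transpose eta = eta"
  shows "eta_dot eta (v + t *\<^sub>R w) (v + t *\<^sub>R w) = eta_dot eta v v + 2 * t * eta_dot eta v w + t^2 * eta_dot eta w w"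
  using eta_sym[OF assms, of w v]
  by (simp add: eta_add1 eta_add2 eta_scale1 eta_scale2 power2_eq_square algebra_simps)

lemma exists_nonnull:
  fixes eta :: "real^'n::finite^'n"
  assumes sym: "transpose eta = eta" and nondeg: "invertible eta"
  shows "\<exists>w. eta_dot eta w w \<noteq> 0"
proof (rule ccontr)
  assume "\<not> ?thesis"
  hence z: "\<And>w. eta_dot eta w w = 0" by blast
  have "eta $ i $ j = 0" for i j
  proof -
    have "eta_dot eta (axis i 1 + axis j 1) (axis i 1 + axis j 1) = 0" by (rule z)
    hence "eta_dot eta (axis i 1) (axis j 1) + eta_dot eta (axis j 1) (axis i 1) = 0"
      using z[of "axis i 1"] z[of "axis j 1"] by (simp add: eta_add1 eta_add2)
    thus ?thesis using eta_sym[OF sym, of "axis i 1" "axis j 1"] by (simp add: eta_dot_axis)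
  qed
  hence "eta = 0" by (simp add: vec_eq_iff)
  then obtain B where "(0::real^'n^'n) ** B = mat 1" using nondeg by (auto simp: invertible_def)
  hence "(0::real^'n^'n) = mat 1" by simp
  hence "(0::real^'n^'n) $ k $ k = mat 1 $ k $ k" for k by simp
  also have "(mat 1::real^'n^'n) $ k $ k = 1" for k by (simp add: mat_def)
  finally show False by simp
qed

theorem mainTheorem9:
  fixes eta :: "real^'n^'n" and a :: "'n \<Rightarrow> 'n \<Rightarrow> 'n \<Rightarrow> 'n \<Rightarrow> real"
  assumes dim: "CARD('n) \<ge> 2"
    and sym: "transpose eta = eta"
    and nondeg: "invertible eta"
    and anti1: "\<And>m n r l. a m n r l = - a n m r l"
    and anti2: "\<And>m n r l. a m n r l = - a m n l r"
    and pairsym: "\<And>m n r l. a m n r l = a r l m n"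
    and cyclic: "\<And>m n r l. a m n r l + a m r l n + a m l n r = 0"
    and ident: "\<And>u v :: real^'n.
      (\<Sum>m\<in>UNIV. \<Sum>r\<in>UNIV. \<Sum>n\<in>UNIV. \<Sum>l\<in>UNIV.
          a m r n l * (matrix_inv eta $ m $ n) * v $ r * v $ l)
        * (eta_dot eta u v)^2
      + (\<Sum>m\<in>UNIV. \<Sum>r\<in>UNIV. \<Sum>n\<in>UNIV. \<Sum>l\<in>UNIV.
          a m r n l * u $ m * u $ n * v $ r * v $ l)
        * eta_dot eta v v = 0"
  shows "\<forall>m n r l. a m n r l = 0"
proof -
  define T where "T v = (\<Sum>m\<in>UNIV. \<Sum>r\<in>UNIV. \<Sum>n\<in>UNIV. \<Sum>l\<in>UNIV.
          a m r n l * (matrix_inv eta $ m $ n) * v $ r * v $ l)" for v :: "real^'n"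
  have id2: "T v * (eta_dot eta u v)^2 + a4 a u v u v * eta_dot eta v v = 0" for u v
  proof -
    have "a4 a u v u v = (\<Sum>m\<in>UNIV. \<Sum>r\<in>UNIV. \<Sum>n\<in>UNIV. \<Sum>l\<in>UNIV.
          a m r n l * u $ m * u $ n * v $ r * v $ l)"
      unfolding a4_def by (intro sum.cong refl) (simp add: mult.commute mult.left_commute)
    thus ?thesis using ident[of v u] unfolding T_def by simp
  qed
  have A: "a4 a u v u v = 0" if "eta_dot eta v v \<noteq> 0" for u v
  proof -
    have "a4 a v v v v = 0" using a4_anti[OF anti1, where x=v and y=v and z=v and w=v] by simp
    hence "T v * (eta_dot eta v v)^2 = 0" using id2[where u=v and v=v] by simp
    hence "T v = 0" using that by simp
    thus ?thesis using id2[where u=u and v=v] that by simp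
  qed
  obtain w where w: "eta_dot eta w w \<noteq> 0" using exists_nonnull[OF sym nondeg] by blast
  have C: "a4 a u v u v = 0" for u v
  proof (cases "eta_dot eta v v = 0")
    case False thus ?thesis by (rule A)
  next
    case True
    define f where "f t = a4 a u (v + t *\<^sub>R w) u (v + t *\<^sub>R w)" for t :: real
    define b where "b = eta_dot eta v w"
    define c where "c = eta_dot eta w w"
    have c0: "c \<noteq> 0" using w c_def by simp
    have Qe: "eta_dot eta (v + t *\<^sub>R w) (v + t *\<^sub>R w) = t * (2 * b + t * c)" for t
      using Q_expand[OF sym, of v t w] True unfolding b_def c_def by (simp add: power2_eq_square algebra_simps)
    have ev: "eventually (\<lambda>t. eta_dot eta (v + t *\<^sub>R w) (v + t *\<^sub>R w) \<noteq> 0) (at (0::real))"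
    proof (cases "b = 0")
      case True
      show ?thesis unfolding eventually_at Qe
        by (rule exI[of _ 1]) (auto simp: True c0)
    next
      case False
      show ?thesis unfolding eventually_at Qe
      proof (rule exI[of _ "\<bar>b\<bar> / \<bar>c\<bar>"], intro conjI ballI impI)
        show "0 < \<bar>b\<bar> / \<bar>c\<bar>" using False c0 by simp
      next
        fix t :: real assume h: "t \<noteq> 0 \<and> dist t 0 < \<bar>b\<bar> / \<bar>c\<bar>"
        hence "\<bar>t\<bar> * \<bar>c\<bar> < \<bar>b\<bar>" using c0 by (simp add: field_simps)
        hence "\<bar>t * c\<bar> < \<bar>2 * b\<bar>" by (simp add: abs_mult)
        hence "2 * b + t * c \<noteq> 0" by linarith
        thus "t * (2 * b + t * c) \<noteq> 0" using h by simp
      qed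
    qed
    have ev2: "eventually (\<lambda>t. 0 = f t) (at (0::real))"
      using ev by eventually_elim (simp add: f_def A)
    have "continuous_on UNIV f" unfolding f_def by (rule a4_cont)
    hence "(f \<longlongrightarrow> f 0) (at 0)"
      by (simp add: continuous_on_eq_continuous_at isCont_def)
    moreover have "(f \<longlongrightarrow> 0) (at 0)"
      by (rule Lim_transform_eventually[OF tendsto_const ev2])
    ultimately have "f 0 = 0" by (rule tendsto_unique[rotated]) simp
    thus ?thesis by (simp add: f_def)
  qed
  have P1: "a4 a u v x v = 0" for u v x
  proof -
    have "a4 a (u + x) v (u + x) v = 0" by (rule C)
    hence "a4 a u v x v + a4 a x v u v = 0" using C[of u v] C[of x v]
      by (simp add: a4_add1 a4_add3)
    thus ?thesis using a4_pair[OF pairsym, where x=x and y=v and z=u and w=v] by simp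
  qed
  have P2: "a4 a u v x y + a4 a u y x v = 0" for u v x y
  proof -
    have "a4 a u (v + y) x (v + y) = 0" by (rule P1)
    thus ?thesis using P1[of u v x] P1[of u y x] by (simp add: a4_add2 a4_add4)
  qed
  have S: "a m r n l = - a m l n r" for m r n l
    using P2[of "axis m 1" "axis r 1" "axis n 1" "axis l 1"] by (simp add: a4_axis)
  show ?thesis
  proof (intro allI)
    fix m n r l
    have X: "a m n r l = a m r l n"
      using S[of m r l n] anti2[of m n l r] by simp
    have Y: "a m n r l = a m l n r"
      using S[of m n r l] anti2[of m l r n] by simp
    show "a m n r l = 0" using cyclic[of m n r l] X Y by simp
  qed
qed

end
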